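(* Let $R$ be an associative ring with identity and involution $*$, and let $a\in R^{\#}\cap R^{\dagger}$. Then $a\in R^{SEP}$ if and only if $a^{\dagger}a^2$ is a left $(a^{\dagger})^*$-idempotent, i.e. $(a^{\dagger}a^2)^2=(a^{\dagger})^*a^{\dagger}a^2$.
   Context: An involution on $R$ is a map $x\mapsto x^*$ with $(x^* )^*=x$, $(x+y)^*=x^*+y^*$, $(xy)^*=y^*x^*$. An element $a$ is Moore–Penrose invertible if there is $b$ with $aba=a$, $bab=b$, $(ab)^*=ab$, $(ba)^*=ba$; such $b$ is unique, denoted $a^{\dagger}$, and $R^{\dagger}$ is the set of such $a$. An element $a$ is group invertible if there is $b$ with $aba=a$, $bab=b$, $ab=ba$; such $b$ is unique, denoted $a^{\#}$, and $R^{\#}$ is the set of such $a$. For $a\in R^{\#}\cap R^{\dagger}$, $a$ is SEP if $a^*=a^{\dagger}=a^{\#}$; $R^{SEP}$ denotes the set of SEP elements. For $e,c\in R$, $e$ is a left $c$-idempotent if $e^2=ce$. *)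

theory Defs
  imports Main
begin

definition involution :: "('a::ring_1 \<Rightarrow> 'a) \<Rightarrow> bool" where
  "involution st \<longleftrightarrow> (\<forall>x. st (st x) = x) \<and> (\<forall>x y. st (x + y) = st x + st y)
     \<and> (\<forall>x y. st (x * y) = st y * st x)"

definition is_mp_inverse :: "('a::ring_1 \<Rightarrow> 'a) \<Rightarrow> 'a \<Rightarrow> 'a \<Rightarrow> bool" where
  "is_mp_inverse st a b \<longleftrightarrow> a * b * a = a \<and> b * a * b = b
     \<and> st (a * b) = a * b \<and> st (b * a) = b * a"

definition mp_invertible :: "('a::ring_1 \<Rightarrow> 'a) \<Rightarrow> 'a \<Rightarrow> bool" where
  "mp_invertible st a \<longleftrightarrow> (\<exists>b. is_mp_inverse st a b)"

definition mp_inv :: "('a::ring_1 \<Rightarrow> 'a) \<Rightarrow> 'a \<Rightarrow> 'a" where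
  "mp_inv st a = (THE b. is_mp_inverse st a b)"

definition is_group_inverse :: "'a::ring_1 \<Rightarrow> 'a \<Rightarrow> bool" where
  "is_group_inverse a b \<longleftrightarrow> a * b * a = a \<and> b * a * b = b \<and> a * b = b * a"

definition group_invertible :: "'a::ring_1 \<Rightarrow> bool" where
  "group_invertible a \<longleftrightarrow> (\<exists>b. is_group_inverse a b)"

definition group_inv :: "'a::ring_1 \<Rightarrow> 'a" where
  "group_inv a = (THE b. is_group_inverse a b)"

definition SEP :: "('a::ring_1 \<Rightarrow> 'a) \<Rightarrow> 'a \<Rightarrow> bool" where
  "SEP st a \<longleftrightarrow> group_invertible a \<and> mp_invertible st a
     \<and> st a = mp_inv st a \<and> mp_inv st a = group_inv a"

definition left_idempotent :: "'a::ring_1 \<Rightarrow> 'a \<Rightarrow> bool" where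
  "left_idempotent c e \<longleftrightarrow> e * e = c * e"

end

theory Submission
  imports Defs
begin

lemma mp_unique:
  fixes st :: "'a::ring_1 \<Rightarrow> 'a"
  assumes inv: "involution st" and b: "is_mp_inverse st a b" and c: "is_mp_inverse st a c"
  shows "b = c"
proof -
  have ss: "\<And>x. st (st x) = x" and sm: "\<And>x y. st (x * y) = st y * st x"
    using inv unfolding involution_def by auto
  have b1: "a*b*a = a" "b*a*b = b" "st (a*b) = a*b" "st (b*a) = b*a" using b unfolding is_mp_inverse_def by auto
  have c1: "a*c*a = a" "c*a*c = c" "st (a*c) = a*c" "st (c*a) = c*a" using c unfolding is_mp_inverse_def by auto
  have "b = b * st (a*b)" using b1 by (simp add: mult.assoc)
  also have "\<dots> = b * st b * st a" by (simp add: sm mult.assoc)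
  also have "\<dots> = b * st b * st (a*c*a)" using c1 by simp
  also have "\<dots> = b * st (a*b) * st (a*c)" by (simp add: sm mult.assoc)
  also have "\<dots> = b*a*c" using b1 c1 by (simp add: mult.assoc)
  finally have 1: "b = b*a*c" .
  have "c = st (c*a) * c" using c1 by (simp add: mult.assoc)
  also have "\<dots> = st a * st c * c" by (simp add: sm mult.assoc)
  also have "\<dots> = st (a*b*a) * st c * c" using b1 by simp
  also have "\<dots> = st (b*a) * st (c*a) * c" by (simp add: sm mult.assoc)
  also have "\<dots> = b*a*c" using b1 c1 by (simp add: mult.assoc)
  finally show ?thesis using 1 by simp
qed

lemma mp_inv_eq:
  fixes st :: "'a::ring_1 \<Rightarrow> 'a"
  assumes "involution st" "is_mp_inverse st a b"
  shows "mp_inv st a = b"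
  unfolding mp_inv_def using assms mp_unique by blast

lemma grp_unique:
  fixes a b c :: "'a::ring_1"
  assumes b: "is_group_inverse a b" and c: "is_group_inverse a c"
  shows "b = c"
proof -
  have b1: "a*b*a = a" "b*a*b = b" "a*b = b*a" using b unfolding is_group_inverse_def by auto
  have c1: "a*c*a = a" "c*a*c = c" "a*c = c*a" using c unfolding is_group_inverse_def by auto
  have "b*a*(c*a) = b*(a*c*a)" by (simp add: mult.assoc)
  hence e1: "b*a*(c*a) = b*a" using c1 by simp
  have "b*a*(c*a) = (a*b*a)*c" using b1 c1 by (metis mult.assoc)
  hence e2: "b*a*(c*a) = c*a" using b1 c1 by simp
  have ba: "b*a = c*a" using e1 e2 by simp
  have "b = c*a*b" using b1 ba by simp
  also have "\<dots> = c*(c*a)" using b1 ba by (simp add: mult.assoc)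
  also have "\<dots> = c" using c1 by (simp add: mult.assoc)
  finally show ?thesis .
qed

lemma grp_inv_eq:
  fixes a b :: "'a::ring_1"
  assumes "is_group_inverse a b"
  shows "group_inv a = b"
  unfolding group_inv_def using assms grp_unique by blast

theorem theorem3p6:
  fixes st :: "'a::ring_1 \<Rightarrow> 'a" and a :: 'a
  assumes "involution st"
    and "group_invertible a"
    and "mp_invertible st a"
  shows "SEP st a \<longleftrightarrow>
           left_idempotent (st (mp_inv st a)) (mp_inv st a * a ^ 2)"
proof -
  have ss: "\<And>x. st (st x) = x" and sm: "\<And>x y. st (x * y) = st y * st x"
    using assms(1) unfolding involution_def by auto
  obtain b where bm: "is_mp_inverse st a b" using assms(3) unfolding mp_invertible_def by blast
  obtain g where gg: "is_group_inverse a g" using assms(2) unfolding group_invertible_def by blast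
  have B: "mp_inv st a = b" using mp_inv_eq[OF assms(1) bm] .
  have G: "group_inv a = g" using grp_inv_eq[OF gg] .
  have b1: "a*b*a = a" "b*a*b = b" "st (a*b) = a*b" "st (b*a) = b*a" using bm unfolding is_mp_inverse_def by auto
  have g1: "a*g*a = a" "g*a*g = g" "a*g = g*a" using gg unfolding is_group_inverse_def by auto
  have e2: "(b*a^2)*(b*a^2) = b*a^3"
    using b1 by (simp add: power2_eq_square power3_eq_cube mult.assoc) (metis mult.assoc)
  have sbbaa: "st b * (b*a^2) = st b * a"
  proof -
    have "st b * (b*a) = st b" using b1 by (metis mult.assoc sm)
    thus ?thesis by (simp add: power2_eq_square mult.assoc) (metis mult.assoc)
  qed
  show ?thesis
  proof
    assume S: "SEP st a"
    then have sa: "st a = b" and bg: "b = g" using B G unfolding SEP_def by auto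
    have "st b = a" using sa ss by metis
    moreover have "a*b*(a*a) = a*a" using b1 by (metis mult.assoc)
    ultimately show "left_idempotent (st (mp_inv st a)) (mp_inv st a * a ^ 2)"
      unfolding left_idempotent_def B e2 using b1 bg g1
      by (simp add: power2_eq_square power3_eq_cube mult.assoc)
  next
    assume L: "left_idempotent (st (mp_inv st a)) (mp_inv st a * a ^ 2)"
    have sbba: "st b * (b*a) = st b" using b1 by (metis mult.assoc sm)
    have H: "b*a^3 = st b * a" using L sbbaa e2 unfolding left_idempotent_def B by simp
    have aag: "a*a*g = a" using g1 by (metis mult.assoc)
    have agg: "a*g*g = g" using g1 by (metis mult.assoc)
    have "b*a^3*(g*g) = b*a" using aag by (simp add: power3_eq_cube mult.assoc) (metis mult.assoc)
    moreover have "st b * a * (g*g) = st b * g" using agg by (metis mult.assoc)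
    ultimately have s2: "b*a = st b * g" using H by simp
    have s3: "b*a = st g * b" using s2 b1 sm ss by metis
    have s4: "a = a * st g * b" using s3 b1 by (metis mult.assoc)
    have s5: "b = b * st b * st a" using b1 sm by (metis mult.assoc)
    have s6: "a = (a * st g * b * st b) * st a" using s4 s5 by (metis mult.assoc)
    have s7: "st a = st a * (a*b)" using b1 sm by (metis mult.assoc)
    have s8: "a = a*a*b" using s6 s7 by (metis mult.assoc)
    have gaa: "g*a*a = a" using g1 by (metis mult.assoc)
    have s9: "g*a = a*b" using s8 gaa by (metis mult.assoc)
    have s10: "a*b*(b*a) = a*b" using s9 g1 b1 by (metis mult.assoc)
    have s11: "b*a*(a*b) = a*b" using s10 b1 sm by metis
    have s12: "b*a*(a*b) = b*a" using s9 g1 by (metis mult.assoc)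
    have comm: "a*b = b*a" using s11 s12 by simp
    have bg: "g = b" using grp_unique[OF gg] b1 comm unfolding is_group_inverse_def by blast
    have s14: "b*a^3 = a*a" using comm b1 by (simp add: power3_eq_cube) (metis mult.assoc)
    have "a*a*b = st b * a * b" using s14 H by simp
    also have "\<dots> = st b" using sbba comm by (metis mult.assoc)
    finally have "a = st b" using s8 by simp
    hence sa: "st a = b" using ss by metis
    show "SEP st a" unfolding SEP_def using assms(2,3) B G bg sa by simp
  qed
qed

end
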